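(* Let $a,d\in\mathbb{C}\setminus\{0\}$ and $b=0$. Then there exists $\varepsilon>0$ (depending on $a$ and $d$) such that for every $f\in\mathbb{C}$ with $|f|<\varepsilon$, the node-wise equi-M sets of the system $z_1(n+1)=(az_1(n))^2+c$, $z_2(n+1)=(dz_1(n)+fz_2(n))^2+c$ coincide: $\mathcal{M}(z_1)=\mathcal{M}(z_2)$.
   Context: For $c\in\mathbb{C}$, the 2D coupled quadratic system with connectivity matrix $A=\begin{pmatrix}a&b\\ d&f\end{pmatrix}$ is the iteration $z_1(n+1)=(az_1(n)+bz_2(n))^2+c$, $z_2(n+1)=(dz_1(n)+fz_2(n))^2+c$. The critical orbit is the orbit with $z_1(0)=z_2(0)=0$. The node-wise equi-M set $\mathcal{M}(z_k)$ ($k=1,2$) is the set of $c\in\mathbb{C}$ for which the sequence $(z_k(n))_{n\ge0}$ of the critical orbit is bounded. *)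

theory Defs
  imports "HOL-Analysis.Analysis"
begin

fun crit_orbit :: "complex \<Rightarrow> complex \<Rightarrow> complex \<Rightarrow> complex \<Rightarrow> complex \<Rightarrow> nat \<Rightarrow> complex \<times> complex" where
  "crit_orbit a b d f c 0 = (0, 0)"
| "crit_orbit a b d f c (Suc n) =
     (let (z1, z2) = crit_orbit a b d f c n
      in ((a * z1 + b * z2)^2 + c, (d * z1 + f * z2)^2 + c))"

definition equiM :: "complex \<Rightarrow> complex \<Rightarrow> complex \<Rightarrow> complex \<Rightarrow> nat \<Rightarrow> complex set" where
  "equiM a b d f k = {c. bounded (range (\<lambda>n. (if k = 1 then fst else snd) (crit_orbit a b d f c n)))}"

end

theory Submission
  imports Defs
begin

lemma orbit_fst: "fst (crit_orbit a 0 d f c (Suc n)) = (a * fst (crit_orbit a 0 d f c n))^2 + c"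
  by (simp add: split_def Let_def)

lemma orbit_snd: "snd (crit_orbit a 0 d f c (Suc n)) =
   (d * fst (crit_orbit a 0 d f c n) + f * snd (crit_orbit a 0 d f c n))^2 + c"
  by (simp add: split_def Let_def)

lemma grow:
  fixes x :: "nat \<Rightarrow> complex"
  assumes st: "\<And>n. x (Suc n) = (x n)^2 + c"
    and t: "norm (x m) = t" "t > 2" "norm c < t"
  shows "norm (x (m+k)) \<ge> t + real k * (t*(t-1) - norm c)"
proof (induction k)
  case 0 then show ?case using t by simp
next
  case (Suc k)
  define y where "y = x (m+k)"
  have dpos: "t*(t-1) - norm c > 0"
  proof -
    have "t*(t-1) \<ge> t*1" using t by (intro mult_left_mono) auto
    then show ?thesis using t by linarith
  qed
  have "real k * (t*(t-1) - norm c) \<ge> 0" using dpos by simp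
  hence yt: "norm y \<ge> t" using Suc unfolding y_def by linarith
  have "norm y * (norm y - 1) \<ge> t * (t - 1)"
    using yt t by (intro mult_mono) auto
  moreover have "norm (y^2 + c) \<ge> norm y ^2 - norm c"
    using norm_diff_ineq[of "y^2" c] by (simp add: norm_power)
  ultimately have "norm (y^2 + c) \<ge> norm y + (t*(t-1) - norm c)"
    by (simp add: power2_eq_square algebra_simps)
  moreover have "x (m + Suc k) = y^2 + c" using st y_def by simp
  ultimately show ?case using Suc unfolding y_def by (simp add: algebra_simps)
qed

lemma escape_unbounded:
  fixes x :: "nat \<Rightarrow> complex"
  assumes st: "\<And>n. x (Suc n) = (x n)^2 + c"
    and t: "norm (x m) > 2" "norm c < norm (x m)"
    and b: "bounded (range x)"
  shows False
proof -
  define t where "t = norm (x m)"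
  define \<delta> where "\<delta> = t*(t-1) - norm c"
  have dpos: "\<delta> > 0"
  proof -
    have "t*(t-1) \<ge> t*1" using t unfolding t_def by (intro mult_left_mono) auto
    then show ?thesis using t unfolding \<delta>_def t_def by linarith
  qed
  obtain B where B: "\<And>n. norm (x n) \<le> B" using b by (auto simp: bounded_iff)
  obtain k :: nat where k: "B < real k * \<delta>" using dpos ex_less_of_nat_mult by blast
  have "norm (x (m+k)) \<ge> t + real k * \<delta>"
    using grow[where x=x and c=c and m=m and t=t and k=k, OF st] t unfolding t_def \<delta>_def by auto
  moreover have "t \<ge> 0" unfolding t_def by simp
  ultimately show False using B[of "m+k"] k by linarith
qed

lemma escape:
  fixes x :: "nat \<Rightarrow> complex"
  assumes x0: "x 0 = 0" and st: "\<And>n. x (Suc n) = (x n)^2 + c"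
    and b: "bounded (range x)"
  shows "norm c \<le> 2 \<and> (\<forall>n. norm (x n) \<le> 2)"
proof -
  have c2: "norm c \<le> 2"
  proof (rule ccontr)
    assume "\<not> norm c \<le> 2"
    hence c: "norm c > 2" by simp
    have x2: "x 2 = c^2 + c" using st[of 0] st[of 1] x0 by (simp add: numeral_2_eq_2)
    have "norm (c^2 + c) \<ge> norm c ^2 - norm c"
      using norm_diff_ineq[of "c^2" c] by (simp add: norm_power)
    moreover have "norm c * norm c > norm c * 2" using c by (intro mult_strict_left_mono) auto
    ultimately have "norm (x 2) > norm c" "norm (x 2) > 2" using c x2
      by (simp_all add: power2_eq_square)
    then show False using escape_unbounded[OF st _ _ b] by blast
  qed
  moreover have "\<forall>n. norm (x n) \<le> 2"
  proof
    fix n show "norm (x n) \<le> 2"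
    proof (rule ccontr)
      assume "\<not> norm (x n) \<le> 2"
      then show False using escape_unbounded[OF st _ _ b, of n] c2 by auto
    qed
  qed
  ultimately show ?thesis by blast
qed

theorem mainTheorem11:
  fixes a d :: complex
  assumes "a \<noteq> 0" and "d \<noteq> 0"
  shows "\<exists>\<epsilon>>0. \<forall>f::complex. norm f < \<epsilon> \<longrightarrow> equiM a 0 d f 1 = equiM a 0 d f 2"
proof -
  define A where "A = norm a ^ 2"
  have Apos: "A > 0" using assms unfolding A_def by simp
  define K where "K = norm d * (2 / A)"
  define C where "C = 2 / A"
  define R where "R = (K + 1)^2 + C"
  have K0: "K \<ge> 0" and C0: "C \<ge> 0" using Apos unfolding K_def C_def by auto
  have Rpos: "R > 0" proof -
    have "(K+1)^2 > 0" using K0 by simp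
    thus ?thesis unfolding R_def using C0 by linarith
  qed
  have "\<forall>f::complex. norm f < 1/R \<longrightarrow> equiM a 0 d f 1 = equiM a 0 d f 2"
  proof (intro allI impI)
    fix f :: complex assume fR: "norm f < 1/R"
    have fR1: "norm f * R \<le> 1" using fR Rpos by (simp add: field_simps)
    show "equiM a 0 d f 1 = equiM a 0 d f 2"
    proof (intro set_eqI iffI)
      fix c assume "c \<in> equiM a 0 d f 1"
      hence b1: "bounded (range (\<lambda>n. fst (crit_orbit a 0 d f c n)))" by (simp add: equiM_def)
      define z1 where "z1 = (\<lambda>n. fst (crit_orbit a 0 d f c n))"
      define z2 where "z2 = (\<lambda>n. snd (crit_orbit a 0 d f c n))"
      define x where "x = (\<lambda>n. a^2 * z1 n)"
      have xst: "\<And>n. x (Suc n) = (x n)^2 + a^2 * c"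
        unfolding x_def z1_def orbit_fst by (simp add: algebra_simps power2_eq_square)
      have x0: "x 0 = 0" unfolding x_def z1_def by simp
      have bx: "bounded (range x)"
      proof -
        obtain B where "\<And>n. norm (z1 n) \<le> B" using b1 unfolding z1_def by (auto simp: bounded_iff)
        hence "\<And>n. norm (x n) \<le> norm a ^ 2 * B" unfolding x_def
          by (simp add: norm_mult norm_power mult_left_mono)
        thus ?thesis by (auto simp: bounded_iff)
      qed
      from escape[OF x0 xst bx] have e1: "A * norm c \<le> 2" and e2: "\<And>n. A * norm (z1 n) \<le> 2"
        unfolding x_def A_def by (auto simp: norm_mult norm_power)
      have cC: "norm c \<le> C" using e1 Apos unfolding C_def by (simp add: field_simps)
      have zK: "norm d * norm (z1 n) \<le> K" for n
        using e2[of n] Apos unfolding K_def by (intro mult_left_mono) (auto simp: field_simps)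
      have "norm (z2 n) \<le> R" for n
      proof (induction n)
        case 0 then show ?case using Rpos unfolding z2_def by simp
      next
        case (Suc n)
        have "norm f * norm (z2 n) \<le> norm f * R" using Suc by (simp add: mult_left_mono)
        hence fz: "norm f * norm (z2 n) \<le> 1" using fR1 by linarith
        have "norm (d * z1 n + f * z2 n) \<le> K + 1"
          using norm_triangle_ineq[of "d * z1 n" "f * z2 n"] zK[of n] fz by (simp add: norm_mult)
        hence "norm (d * z1 n + f * z2 n) ^ 2 \<le> (K+1)^2"
          by (intro power_mono) auto
        moreover have "norm ((d * z1 n + f * z2 n)^2 + c) \<le> norm (d * z1 n + f * z2 n) ^ 2 + norm c"
          using norm_triangle_ineq[of "(d * z1 n + f * z2 n)^2" c] by (simp add: norm_power)
        ultimately show ?case unfolding z2_def orbit_snd R_def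
          using cC unfolding z1_def z2_def by linarith
      qed
      thus "c \<in> equiM a 0 d f 2" unfolding equiM_def z2_def by (auto simp: bounded_iff)
    next
      fix c assume "c \<in> equiM a 0 d f 2"
      hence b2: "bounded (range (\<lambda>n. snd (crit_orbit a 0 d f c n)))" by (simp add: equiM_def)
      define z1 where "z1 = (\<lambda>n. fst (crit_orbit a 0 d f c n))"
      define z2 where "z2 = (\<lambda>n. snd (crit_orbit a 0 d f c n))"
      obtain B where B: "\<And>n. norm (z2 n) \<le> B" using b2 unfolding z2_def by (auto simp: bounded_iff)
      have B0: "B \<ge> 0" using B[of 0] norm_ge_zero[of "z2 0"] by linarith
      have "norm d * norm (z1 n) \<le> sqrt (B + norm c) + norm f * B" for n
      proof -
        have eq: "(d * z1 n + f * z2 n)^2 = z2 (Suc n) - c"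
          unfolding z2_def z1_def orbit_snd by simp
        have "norm (d * z1 n + f * z2 n) ^2 \<le> B + norm c"
          proof -
          have "norm (d * z1 n + f * z2 n) ^2 = norm (z2 (Suc n) - c)" using eq by (metis norm_power)
          thus ?thesis using B[of "Suc n"] norm_triangle_ineq4[of "z2 (Suc n)" c] by linarith
        qed
        hence s: "norm (d * z1 n + f * z2 n) \<le> sqrt (B + norm c)"
          using real_le_rsqrt by blast
        have "norm (d * z1 n) \<le> norm (d * z1 n + f * z2 n) + norm (f * z2 n)"
          using norm_triangle_ineq[of "d * z1 n + f * z2 n" "-(f * z2 n)"] by simp
        moreover have "norm (f * z2 n) \<le> norm f * B" using B[of n] by (simp add: norm_mult mult_left_mono)
        ultimately show ?thesis using s by (simp add: norm_mult)
      qed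
      hence "norm (z1 n) \<le> (sqrt (B + norm c) + norm f * B) / norm d" for n
        using assms(2) by (simp add: field_simps mult.commute)
      thus "c \<in> equiM a 0 d f 1" unfolding equiM_def z1_def by (auto simp: bounded_iff)
    qed
  qed
  moreover have "1/R > 0" using Rpos by simp
  ultimately show ?thesis by blast
qed

end
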